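(* Let $\alpha, \lambda \in (0,1)$, let $k \ge 1$ be an integer, let $V_1,\dots,V_k$ be finite sets, and let $d$ be an integer with $2 \le d \le \min\{|V_1|,\dots,|V_k|\}$. Suppose that $\mathcal{H} \subseteq V_1 \times \dots \times V_k$ satisfies \[ |\mathcal{H}| \le (\alpha\lambda)^k \prod_{i=1}^k |V_i|. \] Then for all but at most \[ (d^k - 1)\,(2\alpha^\lambda)^d \prod_{i=1}^k \binom{|V_i|}{d} \] choices of $W_1 \in \binom{V_1}{d}, \dots, W_k \in \binom{V_k}{d}$, we have \[ |\mathcal{H} \cap (W_1 \times \dots \times W_k)| \le k\lambda d^k. \]
   Context: $\binom{V}{d}$ denotes the family of all $d$-element subsets of $V$. *)

theory Defs
  imports Complex_Main "HOL-Library.FuncSet"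
begin

definition dsubsets :: "'a set \<Rightarrow> nat \<Rightarrow> 'a set set" where
  "dsubsets V d = {W. W \<subseteq> V \<and> card W = d}"

end

theory Submission
  imports Defs
begin

lemma choose_ratio:
  fixes z n t :: nat assumes "z \<le> n" "0 < n"
  shows "real (z choose t) \<le> (real z / real n)^t * real (n choose t)"
proof (cases "t \<le> z")
  case False then show ?thesis by (simp add: binomial_eq_0)
next
  case True
  have "real (z choose t) = (\<Prod>i = 0..<t. real (z - i) / real (t - i))"
    using True by (rule binomial_altdef_of_nat)
  also have "\<dots> \<le> (\<Prod>i = 0..<t. (real z / real n) * (real (n - i) / real (t - i)))"
  proof (rule prod_mono, safe)
    fix i assume i: "i \<in> {0..<t}"
    then have it: "i < t" "i \<le> z" "i \<le> n" using True assms by auto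
    have h: "real (z - i) \<le> real z / real n * real (n - i)"
      using it assms by (simp add: of_nat_diff field_simps mult_left_mono)
    show "real (z - i) / real (t - i) \<le> real z / real n * (real (n - i) / real (t - i))"
      using divide_right_mono[OF h, of "real (t - i)"] by simp
    show "0 \<le> real (z - i) / real (t - i)" by simp
  qed
  also have "\<dots> = (\<Prod>i = 0..<t. real z / real n) * (\<Prod>i = 0..<t. real (n - i) / real (t - i))"
    by (rule prod.distrib)
  also have "\<dots> = (real z / real n)^t * real (n choose t)"
    using True assms by (simp add: binomial_altdef_of_nat)
  finally show ?thesis .
qed

lemma finite_dsubsets: "finite V \<Longrightarrow> finite (dsubsets V d)"
  by (rule finite_subset[of _ "Pow V"]) (auto simp: dsubsets_def)

lemma card_dsubsets: "finite V \<Longrightarrow> card (dsubsets V d) = card V choose d"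
  unfolding dsubsets_def by (rule n_subsets)

lemma count_supersets:
  assumes "finite V" "T \<subseteq> V" "card T = t" "t \<le> d"
  shows "card {S \<in> dsubsets V d. T \<subseteq> S} \<le> (card V - t) choose (d - t)"
proof -
  have fT: "finite T" using assms finite_subset by blast
  have "card {S \<in> dsubsets V d. T \<subseteq> S} \<le> card (dsubsets (V - T) (d - t))"
  proof (rule card_inj_on_le[where f = "\<lambda>S. S - T"])
    show "inj_on (\<lambda>S. S - T) {S \<in> dsubsets V d. T \<subseteq> S}"
      by (rule inj_onI) blast
    show "(\<lambda>S. S - T) ` {S \<in> dsubsets V d. T \<subseteq> S} \<subseteq> dsubsets (V - T) (d - t)"
      using assms fT by (auto simp: dsubsets_def card_Diff_subset)
    show "finite (dsubsets (V - T) (d - t))" using assms by (simp add: finite_dsubsets)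
  qed
  also have "\<dots> = (card V - t) choose (d - t)"
    using assms fT by (simp add: card_dsubsets card_Diff_subset)
  finally show ?thesis .
qed

lemma hyper:
  fixes alpha lam :: real
  assumes V: "finite V" and Z: "Z \<subseteq> V" and dV: "d \<le> card V"
    and a: "0 < alpha" "alpha < 1" and l: "0 < lam" "lam < 1"
    and zb: "real (card Z) \<le> alpha * real (card V)" and d1: "1 \<le> d"
  shows "real (card {S \<in> dsubsets V d. real (card (S \<inter> Z)) > lam * real d})
         \<le> (2 * alpha powr lam) ^ d * real (card V choose d)"
proof -
  define t where "t = nat \<lfloor>lam * real d\<rfloor> + 1"
  have fl0: "0 \<le> \<lfloor>lam * real d\<rfloor>" using l by simp
  have tgt: "real t > lam * real d"
    unfolding t_def using fl0 by linarith
  have "lam * real d < real d" using l d1 by simp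
  then have tled: "t \<le> d" unfolding t_def using fl0 by linarith
  have fZ: "finite Z" using V Z finite_subset by blast
  define n where "n = card V"
  define z where "z = card Z"
  have zn: "z \<le> n" unfolding z_def n_def using V Z card_mono by blast
  have n0: "0 < n" using dV d1 n_def by simp
  have sub: "{S \<in> dsubsets V d. real (card (S \<inter> Z)) > lam * real d}
        \<subseteq> (\<Union>T\<in>dsubsets Z t. {S \<in> dsubsets V d. T \<subseteq> S})"
  proof
    fix S assume S: "S \<in> {S \<in> dsubsets V d. real (card (S \<inter> Z)) > lam * real d}"
    then have "real (card (S \<inter> Z)) > lam * real d" by simp
    then have "t \<le> card (S \<inter> Z)" unfolding t_def using fl0 by linarith
    then obtain T where T: "T \<subseteq> S \<inter> Z" "card T = t" by (meson obtain_subset_with_card_n)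
    then show "S \<in> (\<Union>T\<in>dsubsets Z t. {S \<in> dsubsets V d. T \<subseteq> S})"
      using S by (auto simp: dsubsets_def)
  qed
  have "card {S \<in> dsubsets V d. real (card (S \<inter> Z)) > lam * real d}
        \<le> card (\<Union>T\<in>dsubsets Z t. {S \<in> dsubsets V d. T \<subseteq> S})"
    by (rule card_mono[OF _ sub]) (auto intro: finite_subset[OF _ finite_dsubsets[OF V, of d]])
  also have "\<dots> \<le> (\<Sum>T\<in>dsubsets Z t. card {S \<in> dsubsets V d. T \<subseteq> S})"
    by (rule card_UN_le) (simp add: finite_dsubsets fZ)
  also have "\<dots> \<le> (\<Sum>T\<in>dsubsets Z t. (n - t) choose (d - t))"
  proof (rule sum_mono)
    fix T assume "T \<in> dsubsets Z t"
    then have "T \<subseteq> V" "card T = t" using Z by (auto simp: dsubsets_def)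
    then show "card {S \<in> dsubsets V d. T \<subseteq> S} \<le> (n - t) choose (d - t)"
      unfolding n_def using count_supersets[OF V _ _ tled] by blast
  qed
  also have "\<dots> = (z choose t) * ((n - t) choose (d - t))"
    by (simp add: card_dsubsets fZ z_def)
  finally have c1: "real (card {S \<in> dsubsets V d. real (card (S \<inter> Z)) > lam * real d})
     \<le> real (z choose t) * real ((n - t) choose (d - t))"
    by (metis of_nat_le_iff of_nat_mult)
  also have "\<dots> \<le> (real z / real n)^t * real (n choose t) * real ((n - t) choose (d - t))"
    by (rule mult_right_mono[OF choose_ratio[OF zn n0]]) simp
  also have "\<dots> = (real z / real n)^t * real (n choose d) * real (d choose t)"
  proof -
    have "(n choose d) * (d choose t) = (n choose t) * ((n - t) choose (d - t))"
      using choose_mult[OF tled] dV n_def by simp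
    then have "real (n choose d) * real (d choose t) = real (n choose t) * real ((n - t) choose (d - t))"
      by (metis of_nat_mult)
    then show ?thesis by (simp add: mult.assoc)
  qed
  also have "\<dots> \<le> alpha ^ t * real (n choose d) * 2 ^ d"
  proof -
    have "real z / real n \<le> alpha" using zb n0 by (simp add: z_def n_def divide_le_eq mult.commute)
    then have p: "(real z / real n)^t \<le> alpha ^ t" by (intro power_mono) auto
    have q: "real (d choose t) \<le> 2 ^ d"
      by (metis binomial_le_pow2 of_nat_le_iff of_nat_numeral of_nat_power)
    show ?thesis using a by (intro mult_mono p q) auto
  qed
  also have "\<dots> \<le> alpha powr (lam * real d) * real (n choose d) * 2 ^ d"
  proof -
    have "alpha ^ t = alpha powr real t" using a by (simp add: powr_realpow)
    also have "\<dots> \<le> alpha powr (lam * real d)" using a tgt by (intro powr_mono') auto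
    finally show ?thesis by (intro mult_right_mono) auto
  qed
  also have "\<dots> = (2 * alpha powr lam) ^ d * real (card V choose d)"
  proof -
    have "(alpha powr lam) ^ d = alpha powr (lam * real d)"
      using a by (simp add: powr_realpow[symmetric] powr_powr)
    then show ?thesis by (simp add: power_mult_distrib n_def)
  qed
  finally show ?thesis .
qed

lemma double_count:
  assumes "finite V"
  shows "(\<Sum>x\<in>V. card {S \<in> dsubsets V d. x \<in> S}) = d * card (dsubsets V d)"
proof -
  have fD: "finite (dsubsets V d)" using assms by (rule finite_dsubsets)
  have "(\<Sum>x\<in>V. card {S \<in> dsubsets V d. x \<in> S}) = (\<Sum>x\<in>V. \<Sum>S\<in>dsubsets V d. if x \<in> S then 1 else 0)"
    by (intro sum.cong refl) (simp only: card_eq_sum sum.inter_filter[OF fD])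
  also have "\<dots> = (\<Sum>S\<in>dsubsets V d. \<Sum>x\<in>V. if x \<in> S then 1 else 0)"
    by (rule sum.swap)
  also have "\<dots> = (\<Sum>S\<in>dsubsets V d. card {x \<in> V. x \<in> S})"
    by (intro sum.cong refl) (simp only: card_eq_sum sum.inter_filter[OF assms])
  also have "\<dots> = (\<Sum>S\<in>dsubsets V d. d)"
  proof (rule sum.cong)
    fix S assume "S \<in> dsubsets V d"
    then have "{x \<in> V. x \<in> S} = S" "card S = d" by (auto simp: dsubsets_def)
    then show "card {x \<in> V. x \<in> S} = d" by simp
  qed simp
  finally show ?thesis by simp
qed

definition fib :: "nat \<Rightarrow> (nat \<Rightarrow> 'a) set \<Rightarrow> 'a \<Rightarrow> (nat \<Rightarrow> 'a) set" where
  "fib m H x = (\<lambda>f. restrict f {..<m}) ` {f \<in> H. f m = x}"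

definition badset :: "nat \<Rightarrow> (nat \<Rightarrow> 'a set) \<Rightarrow> nat \<Rightarrow> real \<Rightarrow> (nat \<Rightarrow> 'a) set \<Rightarrow> (nat \<Rightarrow> 'a set) set" where
  "badset k V d lam H = {W \<in> (\<Pi>\<^sub>E i\<in>{..<k}. dsubsets (V i) d).
      real (card (H \<inter> (\<Pi>\<^sub>E i\<in>{..<k}. W i))) > real k * lam * real d ^ k}"

lemma restrict_upd_eq:
  assumes "W \<in> Pi\<^sub>E {..<Suc m} D"
  shows "(restrict W {..<m})(m := W m) = W"
proof
  fix i show "((restrict W {..<m})(m := W m)) i = W i"
  proof (cases "i \<le> m")
    case True then show ?thesis by auto
  next
    case False
    then have "i \<notin> {..<Suc m}" by simp
    then have "W i = undefined" using assms by (rule PiE_arb[rotated])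
    then show ?thesis using False by auto
  qed
qed

lemma fiber_card:
  assumes fH: "finite H" and fW: "finite (W m)"
  shows "card (H \<inter> Pi\<^sub>E {..<Suc m} W) \<le> (\<Sum>x\<in>W m. card (fib m H x \<inter> Pi\<^sub>E {..<m} W))"
proof -
  have eq: "H \<inter> Pi\<^sub>E {..<Suc m} W = (\<Union>x\<in>W m. {f \<in> H \<inter> Pi\<^sub>E {..<Suc m} W. f m = x})"
    by auto
  have "card (H \<inter> Pi\<^sub>E {..<Suc m} W) \<le> (\<Sum>x\<in>W m. card {f \<in> H \<inter> Pi\<^sub>E {..<Suc m} W. f m = x})"
    using arg_cong[OF eq, of card] card_UN_le[OF fW] by (rule ord_eq_le_trans)
  also have "\<dots> \<le> (\<Sum>x\<in>W m. card (fib m H x \<inter> Pi\<^sub>E {..<m} W))"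
  proof (rule sum_mono)
    fix x assume x: "x \<in> W m"
    show "card {f \<in> H \<inter> Pi\<^sub>E {..<Suc m} W. f m = x} \<le> card (fib m H x \<inter> Pi\<^sub>E {..<m} W)"
    proof (rule card_inj_on_le[where f = "\<lambda>f. restrict f {..<m}"])
      show "inj_on (\<lambda>f. restrict f {..<m}) {f \<in> H \<inter> Pi\<^sub>E {..<Suc m} W. f m = x}"
      proof (rule inj_onI)
        fix f g assume f: "f \<in> {f \<in> H \<inter> Pi\<^sub>E {..<Suc m} W. f m = x}"
          and g: "g \<in> {f \<in> H \<inter> Pi\<^sub>E {..<Suc m} W. f m = x}"
          and e: "restrict f {..<m} = restrict g {..<m}"
        have "(restrict f {..<m})(m := f m) = (restrict g {..<m})(m := g m)"
          using e f g by simp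
        moreover have "(restrict f {..<m})(m := f m) = f" using f by (intro restrict_upd_eq[of f m W]) simp
        moreover have "(restrict g {..<m})(m := g m) = g" using g by (intro restrict_upd_eq[of g m W]) simp
        ultimately show "f = g" by simp
      qed
      show "(\<lambda>f. restrict f {..<m}) ` {f \<in> H \<inter> Pi\<^sub>E {..<Suc m} W. f m = x} \<subseteq> fib m H x \<inter> Pi\<^sub>E {..<m} W"
      proof (rule subsetI, elim imageE)
        fix h f assume h: "h = restrict f {..<m}" and f: "f \<in> {f \<in> H \<inter> Pi\<^sub>E {..<Suc m} W. f m = x}"
        have "h \<in> fib m H x" unfolding fib_def h using f by blast
        moreover have "h \<in> Pi\<^sub>E {..<m} W" unfolding h using f by (auto simp: PiE_iff)
        ultimately show "h \<in> fib m H x \<inter> Pi\<^sub>E {..<m} W" by blast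
      qed
      show "finite (fib m H x \<inter> Pi\<^sub>E {..<m} W)"
        using fH by (simp add: fib_def)
    qed
  qed
  finally show ?thesis .
qed

lemma finite_PiE_D:
  fixes k :: nat and V :: "nat \<Rightarrow> 'a set"
  assumes "\<And>i. i < k \<Longrightarrow> finite (V i)"
  shows "finite (Pi\<^sub>E {..<k} (\<lambda>i. dsubsets (V i) d))"
  using assms by (intro finite_PiE) (auto intro: finite_dsubsets simp: lessThan_def)

lemma card_PiE_D:
  fixes k :: nat and V :: "nat \<Rightarrow> 'a set"
  assumes "\<And>i. i < k \<Longrightarrow> finite (V i)"
  shows "card (Pi\<^sub>E {..<k} (\<lambda>i. dsubsets (V i) d)) = (\<Prod>i<k. card (V i) choose d)"
proof -
  have "card (Pi\<^sub>E {..<k} (\<lambda>i. dsubsets (V i) d)) = (\<Prod>i<k. card (dsubsets (V i) d))"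
    by (rule card_PiE) simp
  also have "\<dots> = (\<Prod>i<k. card (V i) choose d)"
    using assms by (intro prod.cong refl) (simp add: card_dsubsets)
  finally show ?thesis .
qed

lemma step:
  fixes V :: "nat \<Rightarrow> 'a set" and H :: "(nat \<Rightarrow> 'a) set" and Z :: "'a set"
    and B lam :: real and m d :: nat
  assumes fin: "\<And>i. i < Suc m \<Longrightarrow> finite (V i)"
    and HP: "H \<subseteq> Pi\<^sub>E {..<Suc m} V"
    and lam: "0 \<le> lam" and B0: "0 \<le> B"
    and hB: "\<And>x. x \<in> V m \<Longrightarrow> x \<notin> Z \<Longrightarrow> real (card (badset m V d lam (fib m H x))) \<le> B"
  shows "real (card (badset (Suc m) V d lam H))
     \<le> real (card {S \<in> dsubsets (V m) d. real (card (S \<inter> Z)) > lam * real d}) * (\<Prod>i<m. real (card (V i) choose d))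
       + real d * real (card (V m) choose d) * B"
proof -
  define D where "D = (\<lambda>i. dsubsets (V i) d)"
  have fH: "finite H"
    by (rule finite_subset[OF HP]) (use fin in \<open>auto intro: finite_PiE\<close>)
  have fVm: "finite (V m)" using fin by simp
  have fPS: "finite (Pi\<^sub>E {..<Suc m} D)" unfolding D_def using fin by (rule finite_PiE_D)
  have fPm: "finite (Pi\<^sub>E {..<m} D)" unfolding D_def using fin by (intro finite_PiE_D) simp
  have fDm: "finite (D m)" unfolding D_def using fVm by (rule finite_dsubsets)
  define A' where "A' = {S \<in> dsubsets (V m) d. real (card (S \<inter> Z)) > lam * real d}"
  define A where "A = {W \<in> Pi\<^sub>E {..<Suc m} D. real (card (W m \<inter> Z)) > lam * real d}"
  define Bx where "Bx = (\<lambda>x. {W \<in> Pi\<^sub>E {..<Suc m} D. x \<in> W m \<and>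
      real (card (fib m H x \<inter> Pi\<^sub>E {..<m} W)) > real m * lam * real d ^ m})"
  have cover: "badset (Suc m) V d lam H \<subseteq> A \<union> (\<Union>x\<in>V m - Z. Bx x)"
  proof
    fix W assume Wb: "W \<in> badset (Suc m) V d lam H"
    show "W \<in> A \<union> (\<Union>x\<in>V m - Z. Bx x)"
    proof (rule ccontr)
      assume nW: "W \<notin> A \<union> (\<Union>x\<in>V m - Z. Bx x)"
      have WP: "W \<in> Pi\<^sub>E {..<Suc m} D" and big: "real (card (H \<inter> Pi\<^sub>E {..<Suc m} W)) > real (Suc m) * lam * real d ^ Suc m"
        using Wb by (auto simp: badset_def D_def)
      have WD: "\<And>i. i < Suc m \<Longrightarrow> W i \<subseteq> V i \<and> card (W i) = d"
        using WP by (auto simp: D_def dsubsets_def PiE_iff)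
      have Wm: "W m \<subseteq> V m" "card (W m) = d" using WD[of m] by auto
      have fWm: "finite (W m)" using Wm fVm finite_subset by blast
      have fWi: "finite (W i)" if "i < m" for i
      proof -
        have "W i \<subseteq> V i" "finite (V i)" using WD[of i] fin[of i] that by auto
        then show ?thesis by (rule finite_subset)
      qed
      have "card (Pi\<^sub>E {..<m} W) = (\<Prod>i<m. card (W i))" by (rule card_PiE) simp
      also have "\<dots> = (\<Prod>i<m. d)" by (rule prod.cong) (use WD in auto)
      finally have cP: "card (Pi\<^sub>E {..<m} W) = d ^ m" by simp
      have fPW: "finite (Pi\<^sub>E {..<m} W)" using fWi by (intro finite_PiE) auto
      define c where "c = (\<lambda>x. real (card (fib m H x \<inter> Pi\<^sub>E {..<m} W)))"
      have cb: "c x \<le> (if x \<in> Z then real d ^ m else real m * lam * real d ^ m)" if x: "x \<in> W m" for x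
      proof (cases "x \<in> Z")
        case True
        have "card (fib m H x \<inter> Pi\<^sub>E {..<m} W) \<le> card (Pi\<^sub>E {..<m} W)"
          using fPW by (intro card_mono) auto
        then show ?thesis using True cP by (simp add: c_def)
      next
        case False
        then have "W \<notin> Bx x" using nW x Wm by blast
        then have "\<not> (real (card (fib m H x \<inter> Pi\<^sub>E {..<m} W)) > real m * lam * real d ^ m)"
          using WP x unfolding Bx_def by blast
        then show ?thesis using False by (simp add: c_def not_less)
      qed
      have "real (card (H \<inter> Pi\<^sub>E {..<Suc m} W)) \<le> real (\<Sum>x\<in>W m. card (fib m H x \<inter> Pi\<^sub>E {..<m} W))"
        by (rule of_nat_mono[OF fiber_card[of H W m, OF fH fWm]])
      also have "\<dots> = (\<Sum>x\<in>W m. c x)" by (simp add: c_def)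
      also have "\<dots> \<le> (\<Sum>x\<in>W m. if x \<in> Z then real d ^ m else real m * lam * real d ^ m)"
        by (rule sum_mono) (rule cb)
      also have "\<dots> = real (card (W m \<inter> Z)) * real d ^ m + real (card (W m - Z)) * (real m * lam * real d ^ m)"
      proof -
        have e1: "W m \<inter> {x. x \<in> Z} = W m \<inter> Z" by blast
        have e2: "W m \<inter> - {x. x \<in> Z} = W m - Z" by blast
        show ?thesis unfolding sum.If_cases[OF fWm] e1 e2 by simp
      qed
      also have "\<dots> \<le> (lam * real d) * real d ^ m + real d * (real m * lam * real d ^ m)"
      proof (rule add_mono)
        have "\<not> real (card (W m \<inter> Z)) > lam * real d" using nW WP by (auto simp: A_def)
        then show "real (card (W m \<inter> Z)) * real d ^ m \<le> (lam * real d) * real d ^ m"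
          by (intro mult_right_mono) auto
        have "card (W m - Z) \<le> d" using Wm fWm by (metis card_mono Diff_subset)
        then show "real (card (W m - Z)) * (real m * lam * real d ^ m) \<le> real d * (real m * lam * real d ^ m)"
          using lam by (intro mult_right_mono) auto
      qed
      also have "\<dots> = real (Suc m) * lam * real d ^ Suc m"
        by (simp add: algebra_simps)
      finally show False using big by simp
    qed
  qed
  have fU: "finite (A \<union> (\<Union>x\<in>V m - Z. Bx x))"
    by (rule finite_subset[OF _ fPS]) (auto simp: A_def Bx_def)
  have c1: "card (badset (Suc m) V d lam H) \<le> card A + (\<Sum>x\<in>V m - Z. card (Bx x))"
  proof -
    have "card (badset (Suc m) V d lam H) \<le> card (A \<union> (\<Union>x\<in>V m - Z. Bx x))"
      by (rule card_mono[OF fU cover])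
    also have "\<dots> \<le> card A + card (\<Union>x\<in>V m - Z. Bx x)" by (rule card_Un_le)
    also have "card (\<Union>x\<in>V m - Z. Bx x) \<le> (\<Sum>x\<in>V m - Z. card (Bx x))"
      using fVm by (intro card_UN_le) simp
    finally show ?thesis by simp
  qed
  have split: "W \<in> (\<lambda>(y, g). g(m := y)) ` (P \<times> Q)"
    if "W \<in> Pi\<^sub>E {..<Suc m} D" "W m \<in> P" "restrict W {..<m} \<in> Q" for W P Q
  proof -
    have "W = (\<lambda>(y, g). g(m := y)) (W m, restrict W {..<m})"
      using restrict_upd_eq[OF that(1)] by simp
    then show ?thesis using that by blast
  qed
  have rP: "restrict W {..<m} \<in> Pi\<^sub>E {..<m} D" if "W \<in> Pi\<^sub>E {..<Suc m} D" for W
    using that by (auto simp: PiE_iff)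
  have cA: "card A \<le> card A' * card (Pi\<^sub>E {..<m} D)"
  proof -
    have "A \<subseteq> (\<lambda>(y, g). g(m := y)) ` (A' \<times> Pi\<^sub>E {..<m} D)"
    proof
      fix W assume "W \<in> A"
      then show "W \<in> (\<lambda>(y, g). g(m := y)) ` (A' \<times> Pi\<^sub>E {..<m} D)"
        by (intro split rP) (auto simp: A_def A'_def D_def PiE_iff)
    qed
    then have "card A \<le> card ((\<lambda>(y, g). g(m := y)) ` (A' \<times> Pi\<^sub>E {..<m} D))"
      using fDm fPm by (intro card_mono) (auto simp: A'_def D_def)
    also have "\<dots> \<le> card (A' \<times> Pi\<^sub>E {..<m} D)" by (rule card_image_le) (use fDm fPm in \<open>auto simp: A'_def D_def\<close>)
    finally show ?thesis by (simp add: card_cartesian_product)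
  qed
  have cBx: "card (Bx x) \<le> card {S \<in> D m. x \<in> S} * card (badset m V d lam (fib m H x))" for x
  proof -
    have fbs: "finite (badset m V d lam (fib m H x))"
      by (rule finite_subset[OF _ fPm]) (auto simp: badset_def D_def)
    have "Bx x \<subseteq> (\<lambda>(y, g). g(m := y)) ` ({S \<in> D m. x \<in> S} \<times> badset m V d lam (fib m H x))"
    proof
      fix W assume W: "W \<in> Bx x"
      then have WP: "W \<in> Pi\<^sub>E {..<Suc m} D" by (simp add: Bx_def)
      have e: "Pi\<^sub>E {..<m} (restrict W {..<m}) = Pi\<^sub>E {..<m} W"
        by (rule PiE_cong) simp
      have "restrict W {..<m} \<in> badset m V d lam (fib m H x)"
        using W rP[OF WP] e by (simp add: badset_def Bx_def D_def)
      moreover have "W m \<in> {S \<in> D m. x \<in> S}" using W by (auto simp: Bx_def PiE_iff)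
      ultimately show "W \<in> (\<lambda>(y, g). g(m := y)) ` ({S \<in> D m. x \<in> S} \<times> badset m V d lam (fib m H x))"
        by (intro split WP)
    qed
    then have "card (Bx x) \<le> card ((\<lambda>(y, g). g(m := y)) ` ({S \<in> D m. x \<in> S} \<times> badset m V d lam (fib m H x)))"
      using fDm fbs by (intro card_mono) auto
    also have "\<dots> \<le> card ({S \<in> D m. x \<in> S} \<times> badset m V d lam (fib m H x))"
      by (rule card_image_le) (use fDm fbs in auto)
    finally show ?thesis by (simp add: card_cartesian_product)
  qed
  have sB: "(\<Sum>x\<in>V m - Z. real (card (Bx x))) \<le> real d * real (card (V m) choose d) * B"
  proof -
    have "(\<Sum>x\<in>V m - Z. real (card (Bx x))) \<le> (\<Sum>x\<in>V m - Z. real (card {S \<in> D m. x \<in> S}) * B)"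
    proof (rule sum_mono)
      fix x assume x: "x \<in> V m - Z"
      have "real (card (Bx x)) \<le> real (card {S \<in> D m. x \<in> S}) * real (card (badset m V d lam (fib m H x)))"
        using cBx[of x] by (metis of_nat_le_iff of_nat_mult)
      also have "\<dots> \<le> real (card {S \<in> D m. x \<in> S}) * B"
        using hB x by (intro mult_left_mono) auto
      finally show "real (card (Bx x)) \<le> real (card {S \<in> D m. x \<in> S}) * B" .
    qed
    also have "\<dots> \<le> (\<Sum>x\<in>V m. real (card {S \<in> D m. x \<in> S}) * B)"
      using fVm B0 by (intro sum_mono2) auto
    also have "\<dots> = real (\<Sum>x\<in>V m. card {S \<in> D m. x \<in> S}) * B"
      by (simp add: sum_distrib_right)
    also have "\<dots> = real d * real (card (V m) choose d) * B"
      unfolding D_def double_count[OF fVm] by (simp add: card_dsubsets fVm)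
    finally show ?thesis .
  qed
  have "real (card (badset (Suc m) V d lam H)) \<le> real (card A) + (\<Sum>x\<in>V m - Z. real (card (Bx x)))"
    using c1 by (metis of_nat_add of_nat_le_iff of_nat_sum)
  also have "\<dots> \<le> real (card A') * (\<Prod>i<m. real (card (V i) choose d)) + real d * real (card (V m) choose d) * B"
  proof (rule add_mono[OF _ sB])
    have "card (Pi\<^sub>E {..<m} D) = (\<Prod>i<m. card (V i) choose d)"
      unfolding D_def using fin by (intro card_PiE_D) simp
    then have "card A \<le> card A' * (\<Prod>i<m. card (V i) choose d)" using cA by simp
    then show "real (card A) \<le> real (card A') * (\<Prod>i<m. real (card (V i) choose d))"
      by (metis of_nat_le_iff of_nat_mult of_nat_prod)
  qed
  finally show ?thesis unfolding A'_def .
qed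

lemma main:
  fixes alpha lam :: real and d m :: nat and V :: "nat \<Rightarrow> 'a set"
  assumes a: "0 < alpha" "alpha < 1" and l: "0 < lam" "lam < 1" and d2: "2 \<le> d"
    and fin: "\<And>i. i < Suc m \<Longrightarrow> finite (V i)"
    and dV: "\<And>i. i < Suc m \<Longrightarrow> d \<le> card (V i)"
  shows "H \<subseteq> Pi\<^sub>E {..<Suc m} V \<Longrightarrow>
     real (card H) \<le> (alpha * lam) ^ Suc m * (\<Prod>i<Suc m. real (card (V i))) \<Longrightarrow>
     real (card (badset (Suc m) V d lam H))
       \<le> (real d ^ Suc m - 1) * (2 * alpha powr lam) ^ d * (\<Prod>i<Suc m. real (card (V i) choose d))"
  using fin dV
proof (induction m arbitrary: H)
  case 0
  have HP: "H \<subseteq> Pi\<^sub>E {..<Suc 0} V" and Hc: "real (card H) \<le> (alpha * lam) ^ Suc 0 * (\<Prod>i<Suc 0. real (card (V i)))"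
    using 0 by auto
  have fV0: "finite (V 0)" using 0 by simp
  have dV0: "d \<le> card (V 0)" using 0 by simp
  define Z where "Z = (\<lambda>f. f 0) ` H"
  have fH: "finite H"
    by (rule finite_subset[OF HP]) (use 0 in \<open>auto intro: finite_PiE\<close>)
  have ZV: "Z \<subseteq> V 0" unfolding Z_def using HP by (auto simp: PiE_iff)
  have "real (card Z) \<le> real (card H)" unfolding Z_def using card_image_le[OF fH, of "\<lambda>f. f 0"] by simp
  also have "\<dots> \<le> alpha * lam * real (card (V 0))" using Hc by simp
  also have "\<dots> \<le> alpha * real (card (V 0))" using a l by (intro mult_right_mono) auto
  finally have Zb: "real (card Z) \<le> alpha * real (card (V 0))" .
  have hB: "real (card (badset 0 V d lam (fib 0 H x))) \<le> 0" if "x \<in> V 0" "x \<notin> Z" for x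
  proof -
    have "fib 0 H x = {}" using that unfolding fib_def Z_def by auto
    then have "badset 0 V d lam (fib 0 H x) = {}" by (simp add: badset_def)
    then show ?thesis by simp
  qed
  have "real (card (badset (Suc 0) V d lam H))
     \<le> real (card {S \<in> dsubsets (V 0) d. real (card (S \<inter> Z)) > lam * real d}) * (\<Prod>i<0. real (card (V i) choose d))
       + real d * real (card (V 0) choose d) * 0"
    by (rule step[OF _ HP _ _ hB]) (use 0 l in auto)
  also have "\<dots> \<le> (2 * alpha powr lam) ^ d * real (card (V 0) choose d)"
    using hyper[OF fV0 ZV dV0 a l Zb] d2 by simp
  also have "\<dots> \<le> (real d ^ Suc 0 - 1) * (2 * alpha powr lam) ^ d * (\<Prod>i<Suc 0. real (card (V i) choose d))"
  proof -
    have X: "0 \<le> (2 * alpha powr lam) ^ d * real (card (V 0) choose d)" by simp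
    have o: "1 \<le> real d - 1" using d2 by simp
    show ?thesis using mult_right_mono[OF o X] by (simp add: mult.assoc)
  qed
  finally show ?case .
next
  case (Suc m)
  define M where "M = Suc m"
  have fin': "\<And>i. i < Suc M \<Longrightarrow> finite (V i)" and dV': "\<And>i. i < Suc M \<Longrightarrow> d \<le> card (V i)"
    using Suc.prems unfolding M_def by auto
  have HP: "H \<subseteq> Pi\<^sub>E {..<Suc M} V"
    and Hc: "real (card H) \<le> (alpha * lam) ^ Suc M * (\<Prod>i<Suc M. real (card (V i)))"
    using Suc.prems unfolding M_def by auto
  define K where "K = (2 * alpha powr lam) ^ d"
  have K0: "0 \<le> K" unfolding K_def by simp
  define P where "P = (\<Prod>i<M. real (card (V i) choose d))"
  have P0: "0 \<le> P" unfolding P_def by (intro prod_nonneg) auto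
  define c where "c = (alpha * lam) ^ M * (\<Prod>i<M. real (card (V i)))"
  have c0: "0 < c" unfolding c_def using a l dV' d2
    by (intro mult_pos_pos prod_pos zero_less_power) (auto, metis less_SucI not_less le_trans zero_less_numeral numeral_le_iff le_less_trans gr0I le_zero_eq)
  define Z where "Z = {x \<in> V M. real (card (fib M H x)) > c}"
  have fVM: "finite (V M)" using fin' by simp
  have dVM: "d \<le> card (V M)" using dV' by simp
  have fH: "finite H"
    by (rule finite_subset[OF HP]) (use fin' in \<open>auto intro: finite_PiE\<close>)
  have ZV: "Z \<subseteq> V M" unfolding Z_def by auto
  have fZ: "finite Z" using fVM ZV finite_subset by blast
  define B where "B = (real d ^ M - 1) * K * P"
  have B0: "0 \<le> B" unfolding B_def using K0 P0 d2 by (intro mult_nonneg_nonneg) (auto simp: one_le_power)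
  have hB: "real (card (badset M V d lam (fib M H x))) \<le> B" if x: "x \<in> V M" "x \<notin> Z" for x
  proof -
    have "fib M H x \<subseteq> Pi\<^sub>E {..<M} V"
    proof
      fix h assume "h \<in> fib M H x"
      then obtain f where f: "f \<in> H" "h = restrict f {..<M}" unfolding fib_def by auto
      then have "\<forall>i\<in>{..<M}. f i \<in> V i" using HP by (auto simp: PiE_iff)
      then show "h \<in> Pi\<^sub>E {..<M} V" unfolding f(2) by (simp add: restrict_PiE_iff)
    qed
    moreover have "real (card (fib M H x)) \<le> c" using x unfolding Z_def by auto
    ultimately show ?thesis
      using Suc.IH[of "fib M H x"] fin' dV' unfolding B_def K_def P_def c_def M_def by auto
  qed
  have sumfib: "(\<Sum>x\<in>Z. real (card (fib M H x))) \<le> real (card H)"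
  proof -
    have "(\<Sum>x\<in>Z. card (fib M H x)) \<le> (\<Sum>x\<in>Z. card {f \<in> H. f M = x})"
      unfolding fib_def using fH by (intro sum_mono card_image_le) auto
    also have "\<dots> = card (\<Union>x\<in>Z. {f \<in> H. f M = x})"
      using fZ fH by (intro card_UN_disjoint[symmetric]) auto
    also have "\<dots> \<le> card H" using fH by (intro card_mono) auto
    finally show ?thesis by (metis of_nat_le_iff of_nat_sum)
  qed
  have "real (card Z) * c \<le> (\<Sum>x\<in>Z. real (card (fib M H x)))"
  proof -
    have "(\<Sum>x\<in>Z. c) \<le> (\<Sum>x\<in>Z. real (card (fib M H x)))"
      by (rule sum_mono) (auto simp: Z_def)
    then show ?thesis by simp
  qed
  also have "\<dots> \<le> real (card H)" by (rule sumfib)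
  also have "\<dots> \<le> (alpha * lam * real (card (V M))) * c"
    using Hc unfolding c_def by (simp add: algebra_simps)
  finally have "real (card Z) \<le> alpha * lam * real (card (V M))"
    using c0 by simp
  also have "\<dots> \<le> alpha * real (card (V M))" using a l by (intro mult_right_mono) auto
  finally have Zb: "real (card Z) \<le> alpha * real (card (V M))" .
  have "real (card (badset (Suc M) V d lam H))
     \<le> real (card {S \<in> dsubsets (V M) d. real (card (S \<inter> Z)) > lam * real d}) * P
       + real d * real (card (V M) choose d) * B"
    unfolding P_def by (rule step[OF fin' HP _ B0 hB]) (use l in auto)
  also have "\<dots> \<le> K * real (card (V M) choose d) * P + real d * real (card (V M) choose d) * B"
    using hyper[OF fVM ZV dVM a l Zb] d2 P0 B0 unfolding K_def
    by (intro add_mono mult_right_mono) auto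
  also have "\<dots> = (1 + real d * (real d ^ M - 1)) * K * P * real (card (V M) choose d)"
    unfolding B_def by (simp add: algebra_simps)
  also have "\<dots> \<le> (real d ^ Suc M - 1) * K * P * real (card (V M) choose d)"
  proof -
    have "1 + real d * (real d ^ M - 1) \<le> real d ^ Suc M - 1" using d2 by (simp add: algebra_simps)
    moreover have "0 \<le> K * P * real (card (V M) choose d)" using K0 P0 by simp
    ultimately show ?thesis using mult_right_mono by (metis mult.assoc)
  qed
  also have "\<dots> = (real d ^ Suc M - 1) * (2 * alpha powr lam) ^ d * (\<Prod>i<Suc M. real (card (V i) choose d))"
    unfolding K_def P_def by (simp add: mult.assoc)
  finally show ?case unfolding M_def .
qed

theorem lemmaA2:
  fixes alpha lam :: real and k d :: nat
    and V :: "nat \<Rightarrow> 'a set" and H :: "(nat \<Rightarrow> 'a) set"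
  assumes "0 < alpha" "alpha < 1" "0 < lam" "lam < 1"
    and "k \<ge> 1"
    and "\<And>i. i < k \<Longrightarrow> finite (V i)"
    and "2 \<le> d" "\<And>i. i < k \<Longrightarrow> d \<le> card (V i)"
    and "H \<subseteq> (\<Pi>\<^sub>E i\<in>{..<k}. V i)"
    and "real (card H) \<le> (alpha * lam) ^ k * (\<Prod>i<k. real (card (V i)))"
  shows "real (card {W \<in> (\<Pi>\<^sub>E i\<in>{..<k}. dsubsets (V i) d).
            real (card (H \<inter> (\<Pi>\<^sub>E i\<in>{..<k}. W i))) > real k * lam * real d ^ k})
         \<le> (real d ^ k - 1) * (2 * alpha powr lam) ^ d * (\<Prod>i<k. real (card (V i) choose d))"
proof -
  obtain m where k: "k = Suc m" using assms(5) by (cases k) auto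
  have eq: "{W \<in> (\<Pi>\<^sub>E i\<in>{..<k}. dsubsets (V i) d).
            real (card (H \<inter> (\<Pi>\<^sub>E i\<in>{..<k}. W i))) > real k * lam * real d ^ k} = badset k V d lam H"
    by (simp add: badset_def)
  show ?thesis unfolding eq unfolding k
    by (rule main[OF assms(1-4,7)]) (use assms in \<open>auto simp: k\<close>)
qed

end
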